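(* Let $\mathcal{N}$ be a Beeping Network with $n$ nodes and maximum degree $\Delta$, where each node has a unique ID from $[1,n^c]$ for a constant $c\ge 1$ and each node knows $n$ and the parameter $c$. Then there is a deterministic distributed algorithm that solves the Learning Neighborhood problem on $\mathcal{N}$ in $O(\Delta^2\log^2 n)$ beeping rounds.
   Context: A Beeping Network is a network of $n$ nodes whose topology is an undirected graph $G=(V,E)$; $N(v)$ denotes the set of neighbors of $v$. Time is divided into synchronous rounds and all nodes start simultaneously. In each round every node either beeps or listens; a listening node hears "silence" if no neighbor beeps and "noise" if at least one neighbor beeps, and cannot distinguish one beep from several. Complexity is measured in rounds. Learning Neighborhood: the problem is solved once every node $v$ knows the ID of every node $u\in N(v)$. *)

theory Defs
  imports Complex_Main
begin

datatype obs = Beeped | Silence | Noise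

text \<open>In each round a node beeps, listens, or has terminated with an output
(the set of IDs it believes to be its neighbours).\<close>
datatype act = Beep | Listen | Halt "nat set"

text \<open>A deterministic distributed algorithm: the action of a node depends only on
the known n, its own ID and its local history of observations.\<close>
type_synonym alg = "nat \<Rightarrow> nat \<Rightarrow> obs list \<Rightarrow> act"

definition simple_graph :: "nat \<Rightarrow> (nat \<Rightarrow> nat \<Rightarrow> bool) \<Rightarrow> bool" where
  "simple_graph n E \<longleftrightarrow> (\<forall>u v. E u v \<longrightarrow> u < n \<and> v < n \<and> u \<noteq> v \<and> E v u)"

definition nbrs :: "nat \<Rightarrow> (nat \<Rightarrow> nat \<Rightarrow> bool) \<Rightarrow> nat \<Rightarrow> nat set" where
  "nbrs n E v = {u. u < n \<and> E v u}"

definition max_degree :: "nat \<Rightarrow> (nat \<Rightarrow> nat \<Rightarrow> bool) \<Rightarrow> nat" where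
  "max_degree n E = Max ((\<lambda>v. card (nbrs n E v)) ` {0..<n})"

text \<open>Local histories after t synchronous rounds (all nodes start simultaneously).
A terminated node neither beeps nor records anything further.\<close>
primrec hists :: "alg \<Rightarrow> nat \<Rightarrow> (nat \<Rightarrow> nat \<Rightarrow> bool) \<Rightarrow> (nat \<Rightarrow> nat) \<Rightarrow> nat \<Rightarrow> nat \<Rightarrow> obs list" where
  "hists A n E ID 0 = (\<lambda>v. [])"
| "hists A n E ID (Suc t) = (\<lambda>v.
     (case A n (ID v) (hists A n E ID t v) of
        Halt S \<Rightarrow> hists A n E ID t v
      | Beep \<Rightarrow> hists A n E ID t v @ [Beeped]
      | Listen \<Rightarrow> hists A n E ID t v @
          [if \<exists>u\<in>nbrs n E v. A n (ID u) (hists A n E ID t u) = Beep then Noise else Silence]))"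

definition solves_within :: "alg \<Rightarrow> nat \<Rightarrow> (nat \<Rightarrow> nat \<Rightarrow> bool) \<Rightarrow> (nat \<Rightarrow> nat) \<Rightarrow> nat \<Rightarrow> bool" where
  "solves_within A n E ID T \<longleftrightarrow>
     (\<forall>v<n. \<exists>t\<le>T. A n (ID v) (hists A n E ID t v) = Halt (ID ` nbrs n E v))"

end

theory Submission
  imports Defs "HOL-Library.FuncSet"
begin


definition goodH :: "nat \<Rightarrow> nat \<Rightarrow> nat \<Rightarrow> nat \<Rightarrow> (nat \<times> nat \<Rightarrow> nat) \<Rightarrow> bool" where
 "goodH N K t q H \<longleftrightarrow> H \<in> PiE ({0..<t}\<times>{0..<N}) (\<lambda>_. {0..<q}) \<and>
   (\<forall>x<N. \<forall>S. S \<subseteq> {0..<N} \<longrightarrow> x \<notin> S \<longrightarrow> card S \<le> K \<longrightarrow> (\<exists>k<t. \<forall>y\<in>S. H (k,y) \<noteq> H (k,x)))"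

lemma card_E:
  assumes "x < N" "\<sigma> \<in> PiE {0..<t} (\<lambda>_. {0..<N} - {x})"
  shows "card {H \<in> PiE ({0..<t}\<times>{0..<N}) (\<lambda>_. {0..<q}). \<forall>k<t. H (k,x) = H (k, \<sigma> k)} \<le> q ^ (t*N - t)"
proof -
  let ?D = "{0..<t}\<times>{0..<N}" let ?C = "{0..<t}\<times>{x}"
  let ?O' = "PiE (?D - ?C) (\<lambda>_. {0..<q::nat})"
  define ext where "ext G = (\<lambda>p. if p \<in> ?C then G (fst p, \<sigma> (fst p)) else G p)" for G :: "nat\<times>nat \<Rightarrow> nat"
  have sub: "{H \<in> PiE ?D (\<lambda>_. {0..<q}). \<forall>k<t. H (k,x) = H (k, \<sigma> k)} \<subseteq> ext ` ?O'"
  proof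
    fix H assume H: "H \<in> {H \<in> PiE ?D (\<lambda>_. {0..<q}). \<forall>k<t. H (k,x) = H (k, \<sigma> k)}"
    have "restrict H (?D - ?C) \<in> ?O'" using H by (auto simp: PiE_def Pi_def)
    moreover have "ext (restrict H (?D - ?C)) = H"
    proof
      fix p show "ext (restrict H (?D-?C)) p = H p"
      proof (cases "p \<in> ?C")
        case True then obtain k where p: "p=(k,x)" "k<t" by auto
        have "\<sigma> k \<in> {0..<N} - {x}" using assms(2) p by auto
        then show ?thesis using H p by (auto simp: ext_def)
      next
        case False then show ?thesis using H by (cases p) (auto simp: ext_def PiE_def extensional_def)
      qed
    qed
    ultimately show "H \<in> ext ` ?O'" by (metis image_eqI)
  qed
  have "card {H \<in> PiE ?D (\<lambda>_. {0..<q}). \<forall>k<t. H (k,x) = H (k, \<sigma> k)} \<le> card (ext ` ?O')"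
    by (rule card_mono[OF _ sub]) (simp add: finite_PiE)
  also have "\<dots> \<le> card ?O'" by (rule card_image_le) (simp add: finite_PiE)
  also have "card ?O' = q ^ card (?D - ?C)" by (simp add: card_PiE)
  also have "card (?D - ?C) = t*N - t" using assms(1)
    by (subst card_Diff_subset) (auto simp: card_cartesian_product)
  finally show ?thesis .
qed

lemma card_UN_bound:
  assumes "finite I" "\<And>i. i \<in> I \<Longrightarrow> card (A i) \<le> m"
  shows "card (\<Union>i\<in>I. A i) \<le> card I * m"
proof -
  have "card (\<Union>i\<in>I. A i) \<le> (\<Sum>i\<in>I. card (A i))" by (rule card_UN_le[OF assms(1)])
  also have "\<dots> \<le> of_nat (card I) * m" by (rule sum_bounded_above) (rule assms(2))
  finally show ?thesis by simp
qed

lemma surj_from_K: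
  assumes "finite S" "S \<noteq> {}" "card S \<le> K"
  shows "\<exists>f \<in> PiE {0..<K} (\<lambda>_. S). f ` {0..<K} = S"
proof -
  obtain xs where xs: "set xs = S" "distinct xs" using assms(1) finite_distinct_list by blast
  have len: "length xs = card S" using xs distinct_card by fastforce
  have lpos: "length xs > 0" using xs assms(2) by auto
  have mi: "\<And>i. min i (length xs - 1) < length xs" using lpos by (simp add: min.strict_coboundedI2)
  define f where "f = restrict (\<lambda>i. xs ! (min i (length xs - 1))) {0..<K}"
  have "f \<in> PiE {0..<K} (\<lambda>_. S)" unfolding f_def using xs mi by (auto intro!: nth_mem)
  moreover have "f ` {0..<K} = S"
  proof
    show "f ` {0..<K} \<subseteq> S" unfolding f_def using xs mi by (auto intro!: nth_mem)
    show "S \<subseteq> f ` {0..<K}"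
    proof
      fix s assume "s \<in> S"
      then obtain i where i: "i < length xs" "xs ! i = s" using xs by (metis in_set_conv_nth)
      then have "i < K" using len assms(3) by simp
      moreover have "f i = s" using i \<open>i<K\<close> unfolding f_def by auto
      ultimately show "s \<in> f ` {0..<K}" by force
    qed
  qed
  ultimately show ?thesis by blast
qed

lemma exists_goodH:
  assumes K: "K \<ge> 1" and Nb: "N < 2^b"
  shows "\<exists>H. goodH N K ((K+1)*b) (2*K) H"
proof -
  define t where "t = (K+1)*b"
  define q where "q = 2*K"
  define Om where "Om = PiE ({0..<t}\<times>{0..<N}) (\<lambda>_. {0..<q})"
  define E where "E x \<sigma> = {H \<in> Om. \<forall>k<t. H (k,x) = H (k, \<sigma> k)}" for x \<sigma>
  define Bad where "Bad = (\<Union>x\<in>{0..<N}. \<Union>f\<in>PiE {0..<K} (\<lambda>_. {0..<N}-{x}).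
        \<Union>\<sigma>\<in>PiE {0..<t} (\<lambda>_. f ` {0..<K}). E x \<sigma>)"
  have cardBad: "card Bad \<le> N * (N^K * (K^t * q^(t*N-t)))"
    unfolding Bad_def
  proof (rule card_UN_bound[where I="{0..<N}", simplified])
    fix x assume x: "x < N"
    have cN: "card ({0..<N}-{x}) \<le> N" by (rule order_trans[OF card_Diff1_le]) simp
    have "card (\<Union>f\<in>PiE {0..<K} (\<lambda>_. {0..<N}-{x}). \<Union>\<sigma>\<in>PiE {0..<t} (\<lambda>_. f ` {0..<K}). E x \<sigma>)
        \<le> card (PiE {0..<K} (\<lambda>_. {0..<N}-{x})) * (K^t * q^(t*N-t))"
    proof (rule card_UN_bound)
      show "finite (PiE {0..<K} (\<lambda>_. {0..<N}-{x}))" by (simp add: finite_PiE)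
      fix f assume f: "f \<in> PiE {0..<K} (\<lambda>_. {0..<N}-{x})"
      have "card (\<Union>\<sigma>\<in>PiE {0..<t} (\<lambda>_. f ` {0..<K}). E x \<sigma>)
          \<le> card (PiE {0..<t} (\<lambda>_. f ` {0..<K})) * q^(t*N-t)"
      proof (rule card_UN_bound)
        show "finite (PiE {0..<t} (\<lambda>_. f ` {0..<K}))" by (simp add: finite_PiE)
        fix \<sigma> assume \<sigma>: "\<sigma> \<in> PiE {0..<t} (\<lambda>_. f ` {0..<K})"
        have "\<forall>k<t. \<sigma> k \<in> {0..<N}-{x}"
        proof (intro allI impI)
          fix k assume "k < t"
          then have "\<sigma> k \<in> f ` {0..<K}" using \<sigma> by (auto simp: PiE_iff)
          then obtain i where "i < K" "\<sigma> k = f i" by auto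
          then show "\<sigma> k \<in> {0..<N}-{x}" using f by (auto simp: PiE_iff)
        qed
        then have "\<sigma> \<in> PiE {0..<t} (\<lambda>_. {0..<N} - {x})" using \<sigma> by (auto simp: PiE_iff)
        then show "card (E x \<sigma>) \<le> q^(t*N-t)" unfolding E_def Om_def using card_E[OF x] by blast
      qed
      also have "card (PiE {0..<t} (\<lambda>_. f ` {0..<K})) \<le> K^t"
        by (simp add: card_PiE) (metis card_atLeastLessThan card_image_le finite_atLeastLessThan minus_nat.diff_0 power_mono zero_le)
      finally show "card (\<Union>\<sigma>\<in>PiE {0..<t} (\<lambda>_. f ` {0..<K}). E x \<sigma>) \<le> K^t * q^(t*N-t)"
        by (simp add: mult_right_mono)
    qed
    also have "card (PiE {0..<K} (\<lambda>_. {0..<N}-{x})) \<le> N^K"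
      using cN by (simp add: card_PiE power_mono)
    finally show "card (\<Union>f\<in>PiE {0..<K} (\<lambda>_. {0..<N}-{x}). \<Union>\<sigma>\<in>PiE {0..<t} (\<lambda>_. f ` {0..<K}). E x \<sigma>)
        \<le> N^K * (K^t * q^(t*N-t))" by (simp add: mult_right_mono)
  qed
  have cardOm: "card Om = q^(t*N)" unfolding Om_def by (simp add: card_PiE card_cartesian_product)
  have ineq: "N * (N^K * (K^t * q^(t*N-t))) < q^(t*N)"
  proof (cases "N = 0")
    case True then show ?thesis by simp
  next
    case False
    have tt: "t*N = t + (t*N - t)" using False by (simp add: add_diff_inverse_nat)
    have qq: "q^(t*N) = 2^t * K^t * q^(t*N-t)"
      by (subst tt, simp only: power_add q_def power_mult_distrib)
    have "N * N^K = N^(K+1)" by simp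
    also have "\<dots> < (2^b)^(K+1)" using Nb by (intro power_strict_mono) auto
    also have "\<dots> = 2^t" unfolding t_def by (simp add: power_mult[symmetric] mult.commute power_add)
    finally have a: "N * N^K < 2^t" .
    have pos: "K^t * q^(t*N-t) > 0" using K unfolding q_def by simp
    have "N * (N^K * (K^t * q^(t*N-t))) = (N * N^K) * (K^t * q^(t*N-t))" by simp
    also have "\<dots> < 2^t * (K^t * q^(t*N-t))" using a pos by simp
    finally show ?thesis using qq by simp
  qed
  have "card Bad < card Om" using cardBad cardOm ineq by linarith
  moreover have "finite Om" unfolding Om_def by (simp add: finite_PiE)
  moreover have "Bad \<subseteq> Om" unfolding Bad_def E_def by auto
  ultimately have "\<not> Om \<subseteq> Bad" by auto
  then obtain H where H: "H \<in> Om" "H \<notin> Bad" by blast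
  have "goodH N K t q H"
    unfolding goodH_def
  proof (intro conjI allI impI)
    show "H \<in> PiE ({0..<t}\<times>{0..<N}) (\<lambda>_. {0..<q})" using H Om_def by simp
    fix x S assume x: "x < N" and S: "S \<subseteq> {0..<N}" "x \<notin> S" "card S \<le> K"
    show "\<exists>k<t. \<forall>y\<in>S. H (k,y) \<noteq> H (k,x)"
    proof (rule ccontr)
      assume "\<not> ?thesis"
      then have cov: "\<forall>k<t. \<exists>y\<in>S. H (k,y) = H (k,x)" by auto
      have "t > 0"
      proof -
        have "b > 0" using x Nb by (cases b) auto
        then show ?thesis unfolding t_def by simp
      qed
      then have ne: "S \<noteq> {}" using cov by blast
      have fin: "finite S" using S(1) finite_subset by blast
      obtain f where f: "f \<in> PiE {0..<K} (\<lambda>_. S)" "f ` {0..<K} = S"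
        using surj_from_K[OF fin ne S(3)] by blast
      have f2: "f \<in> PiE {0..<K} (\<lambda>_. {0..<N}-{x})" using f(1) S(1,2) by (auto simp: PiE_iff subset_iff)
      define \<sigma> where "\<sigma> = restrict (\<lambda>k. SOME y. y \<in> S \<and> H (k,y) = H (k,x)) {0..<t}"
      have sig: "\<forall>k<t. \<sigma> k \<in> S \<and> H (k, \<sigma> k) = H (k,x)"
      proof (intro allI impI)
        fix k assume "k < t"
        then show "\<sigma> k \<in> S \<and> H (k, \<sigma> k) = H (k,x)" unfolding \<sigma>_def
          using someI_ex[of "\<lambda>y. y \<in> S \<and> H (k,y) = H (k,x)"] cov by auto
      qed
      have "\<forall>k\<in>{0..<t}. \<sigma> k \<in> f ` {0..<K}" using sig f(2) by auto
      moreover have "\<sigma> \<in> extensional {0..<t}" unfolding \<sigma>_def by simp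
      ultimately have sm: "\<sigma> \<in> PiE {0..<t} (\<lambda>_. f ` {0..<K})" by (simp add: PiE_iff)
      have HE: "H \<in> E x \<sigma>" unfolding E_def using H(1) sig by auto
      have "H \<in> Bad" unfolding Bad_def
        apply (rule UN_I[where a=x])
         apply (simp add: x)
        apply (rule UN_I[where a=f])
         apply (rule f2)
        apply (rule UN_I[where a=\<sigma>])
         apply (rule sm)
        apply (rule HE)
        done
      then show False using H(2) by blast
    qed
  qed
  then show ?thesis unfolding t_def q_def by blast
qed



definition NN :: "real \<Rightarrow> nat \<Rightarrow> nat" where "NN c n = nat \<lfloor>real n powr c\<rfloor> + 1"
definition bb :: "real \<Rightarrow> nat \<Rightarrow> nat" where "bb c n = nat \<lceil>c * log 2 (real n)\<rceil> + 2"
definition KK :: "nat \<Rightarrow> nat" where "KK j = 2^j + 1"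
definition tt :: "real \<Rightarrow> nat \<Rightarrow> nat \<Rightarrow> nat" where "tt c n j = (KK j + 1) * bb c n"
definition qq :: "nat \<Rightarrow> nat" where "qq j = 2 * KK j"
definition LL :: "real \<Rightarrow> nat \<Rightarrow> nat \<Rightarrow> nat" where "LL c n j = tt c n j * qq j"
definition HH :: "real \<Rightarrow> nat \<Rightarrow> nat \<Rightarrow> nat \<times> nat \<Rightarrow> nat" where
  "HH c n j = (SOME H. goodH (NN c n) (KK j) (tt c n j) (qq j) H)"
definition code :: "real \<Rightarrow> nat \<Rightarrow> nat \<Rightarrow> nat \<Rightarrow> nat set" where
  "code c n j x = {k * qq j + HH c n j (k,x) | k. k < tt c n j}"
primrec ss :: "real \<Rightarrow> nat \<Rightarrow> nat \<Rightarrow> nat" where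
  "ss c n 0 = 0" | "ss c n (Suc i) = ss c n i + LL c n i + 1"
definition DD :: "real \<Rightarrow> nat \<Rightarrow> nat \<Rightarrow> obs list \<Rightarrow> nat \<Rightarrow> nat set" where
  "DD c n x h j = {y. y < NN c n \<and> y \<noteq> x \<and> (\<forall>r \<in> code c n j y - code c n j x. h ! (ss c n j + r) = Noise)}"
definition done_by :: "real \<Rightarrow> nat \<Rightarrow> nat \<Rightarrow> obs list \<Rightarrow> nat \<Rightarrow> bool" where
  "done_by c n x h i \<longleftrightarrow> (\<exists>j\<le>i. card (DD c n x h j) \<le> 2^j)"
definition outp :: "real \<Rightarrow> nat \<Rightarrow> nat \<Rightarrow> obs list \<Rightarrow> nat set" where
  "outp c n x h = DD c n x h (LEAST j. card (DD c n x h j) \<le> 2^j)"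
definition phase :: "real \<Rightarrow> nat \<Rightarrow> nat \<Rightarrow> nat" where
  "phase c n t = (LEAST i. t < ss c n (Suc i))"
definition haltc :: "real \<Rightarrow> nat \<Rightarrow> nat \<Rightarrow> obs list \<Rightarrow> bool" where
  "haltc c n x h \<longleftrightarrow> (\<exists>i. ss c n i + LL c n i < length h \<and> done_by c n x h i \<and> h ! (ss c n i + LL c n i) = Silence)"
definition beepalg :: "real \<Rightarrow> alg" where
  "beepalg c n x h = (if haltc c n x h then Halt (outp c n x h) else
    (let i = phase c n (length h); r = length h - ss c n i in
     if r < LL c n i then (if r \<in> code c n i x then Beep else Listen)
     else if done_by c n x h i then Listen else Beep))"

lemma NN_bb:
  assumes "c \<ge> 0" "n \<ge> 1"
  shows "NN c n < 2 ^ bb c n"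
proof -
  define X where "X = real n powr c"
  have X1: "X \<ge> 1" unfolding X_def using assms by (simp add: ge_one_powr_ge_zero)
  have l0: "log 2 (real n) \<ge> 0" using assms by simp
  define m where "m = nat \<lceil>c * log 2 (real n)\<rceil>"
  have "c * log 2 (real n) \<le> real m" unfolding m_def by linarith
  then have "2 powr (c * log 2 (real n)) \<le> 2 powr (real m)" by simp
  moreover have "2 powr (c * log 2 (real n)) = X"
  proof -
    have "2 powr (c * log 2 (real n)) = (2 powr log 2 (real n)) powr c" by (simp add: powr_powr mult.commute)
    also have "2 powr log 2 (real n) = real n" using assms by simp
    finally show ?thesis unfolding X_def .
  qed
  ultimately have "X \<le> 2 ^ m" by (simp add: powr_realpow)
  have "real (NN c n) \<le> X + 1" unfolding NN_def X_def[symmetric]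
    using X1 by (simp add: of_nat_nat)
  also have "\<dots> < 4 * X" using X1 by simp
  also have "\<dots> \<le> 4 * 2^m" using \<open>X \<le> 2^m\<close> by simp
  also have "\<dots> = real (2 ^ bb c n)" unfolding bb_def m_def[symmetric] by (simp add: power_add)
  finally show ?thesis by linarith
qed

lemma goodHH:
  assumes "c \<ge> 0" "n \<ge> 1"
  shows "goodH (NN c n) (KK j) (tt c n j) (qq j) (HH c n j)"
proof -
  have "1 \<le> KK j" by (simp add: KK_def)
  from exists_goodH[OF this NN_bb[OF assms]]
  have "\<exists>H. goodH (NN c n) (KK j) (tt c n j) (qq j) H" unfolding tt_def qq_def .
  then show ?thesis unfolding HH_def by (rule someI_ex)
qed

lemma qq_pos: "qq j > 0" by (simp add: qq_def KK_def)

lemma code_lt: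
  assumes "c \<ge> 0" "n \<ge> 1" "x < NN c n" "r \<in> code c n j x"
  shows "r < LL c n j"
proof -
  obtain k where k: "k < tt c n j" "r = k * qq j + HH c n j (k,x)" using assms(4) unfolding code_def by auto
  have "HH c n j (k,x) < qq j" using goodHH[OF assms(1,2), of j] k(1) assms(3)
    unfolding goodH_def by (auto simp: PiE_iff)
  then have "r < (k+1) * qq j" using k by simp
  also have "\<dots> \<le> tt c n j * qq j" using k(1) by (intro mult_right_mono) auto
  finally show ?thesis unfolding LL_def .
qed

lemma divmod_inj:
  fixes q a b k k' :: nat
  assumes "a < q" "b < q" "k * q + a = k' * q + b"
  shows "k = k' \<and> a = b"
proof -
  have "(k * q + a) div q = k" using assms(1) by simp
  moreover have "(k' * q + b) div q = k'" using assms(2) by simp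
  ultimately have "k = k'" using assms(3) by simp
  then show ?thesis using assms(3) by simp
qed

lemma cover_free:
  assumes "c \<ge> 0" "n \<ge> 1" "x < NN c n" "S \<subseteq> {0..<NN c n}" "x \<notin> S" "card S \<le> KK j"
  shows "\<not> code c n j x \<subseteq> (\<Union>y\<in>S. code c n j y)"
proof
  assume sub: "code c n j x \<subseteq> (\<Union>y\<in>S. code c n j y)"
  have g: "goodH (NN c n) (KK j) (tt c n j) (qq j) (HH c n j)" using goodHH[OF assms(1,2)] .
  then obtain k where k: "k < tt c n j" "\<forall>y\<in>S. HH c n j (k,y) \<noteq> HH c n j (k,x)"
    using assms(3-6) unfolding goodH_def by blast
  have "k * qq j + HH c n j (k,x) \<in> code c n j x" using k(1) unfolding code_def by auto
  then obtain y where y: "y \<in> S" "k * qq j + HH c n j (k,x) \<in> code c n j y" using sub by blast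
  then obtain k' where k': "k' < tt c n j" "k * qq j + HH c n j (k,x) = k' * qq j + HH c n j (k',y)"
    unfolding code_def by auto
  have "y < NN c n" using y(1) assms(4) by auto
  then have b1: "HH c n j (k',y) < qq j" using g k'(1) unfolding goodH_def by (auto simp: PiE_iff)
  have b2: "HH c n j (k,x) < qq j" using g k(1) assms(3) unfolding goodH_def by (auto simp: PiE_iff)
  from divmod_inj[OF b2 b1 k'(2)] have "k = k'" "HH c n j (k,x) = HH c n j (k',y)" by auto
  then have "HH c n j (k,y) = HH c n j (k,x)" by simp
  then show False using k(2) y(1) by blast
qed

lemma ss_mono: "i \<le> j \<Longrightarrow> ss c n i \<le> ss c n j"
  by (induction j) (auto simp: le_Suc_eq)

lemma st_lt_ss: "i < j \<Longrightarrow> ss c n i + LL c n i < ss c n j"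
proof -
  assume "i < j"
  then have "Suc i \<le> j" by simp
  then have "ss c n (Suc i) \<le> ss c n j" by (rule ss_mono)
  then show ?thesis by simp
qed

lemma st_le: "i \<le> j \<Longrightarrow> ss c n i + LL c n i \<le> ss c n j + LL c n j"
  using st_lt_ss[of i j c n] by (cases "i = j") auto

lemma st_less_imp: "ss c n i + LL c n i < ss c n j + LL c n j \<Longrightarrow> i < j"
  using st_le[of j i c n] by (meson not_le)

lemma phase_eq: "r \<le> LL c n i \<Longrightarrow> phase c n (ss c n i + r) = i"
  unfolding phase_def
proof (rule Least_equality)
  assume "r \<le> LL c n i"
  then show "ss c n i + r < ss c n (Suc i)" by simp
next
  fix y assume r: "r \<le> LL c n i" and y: "ss c n i + r < ss c n (Suc y)"
  show "i \<le> y"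
  proof (rule ccontr)
    assume "\<not> i \<le> y"
    then have "Suc y \<le> i" by simp
    then have "ss c n (Suc y) \<le> ss c n i" by (rule ss_mono)
    then show False using y by simp
  qed
qed

lemma DD_app:
  assumes "c \<ge> 0" "n \<ge> 1" "ss c n j + LL c n j \<le> length h"
  shows "DD c n x (h @ ys) j = DD c n x h j"
proof -
  have "\<And>y r. y < NN c n \<Longrightarrow> r \<in> code c n j y \<Longrightarrow> (h @ ys) ! (ss c n j + r) = h ! (ss c n j + r)"
  proof -
    fix y r assume "y < NN c n" "r \<in> code c n j y"
    then have "r < LL c n j" using code_lt assms(1,2) by blast
    then show "(h @ ys) ! (ss c n j + r) = h ! (ss c n j + r)" using assms(3) by (simp add: nth_append)
  qed
  then show ?thesis unfolding DD_def by auto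
qed

lemma done_app:
  assumes "c \<ge> 0" "n \<ge> 1" "ss c n i + LL c n i \<le> length h"
  shows "done_by c n x (h @ ys) i = done_by c n x h i"
proof -
  have "\<And>j. j \<le> i \<Longrightarrow> DD c n x (h @ ys) j = DD c n x h j"
    using DD_app[OF assms(1,2)] st_le assms(3) le_trans by blast
  then show ?thesis unfolding done_by_def by auto
qed

lemma alg_halt: "haltc c n x h \<Longrightarrow> beepalg c n x h = Halt (outp c n x h)"
  unfolding beepalg_def by simp

lemma alg_nohalt: "\<not> haltc c n x h \<Longrightarrow> beepalg c n x h = Beep \<or> beepalg c n x h = Listen"
  unfolding beepalg_def by (auto simp: Let_def)

lemma alg_code:
  assumes "\<not> haltc c n x h" "length h = ss c n i + r" "r < LL c n i"
  shows "beepalg c n x h = (if r \<in> code c n i x then Beep else Listen)"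
  using assms phase_eq[of r c n i] unfolding beepalg_def by (simp add: Let_def)

lemma alg_status:
  assumes "\<not> haltc c n x h" "length h = ss c n i + LL c n i"
  shows "beepalg c n x h = (if done_by c n x h i then Listen else Beep)"
  using assms phase_eq[of "LL c n i" c n i] unfolding beepalg_def by (simp add: Let_def)



locale net =
  fixes c :: real and n :: nat and E :: "nat \<Rightarrow> nat \<Rightarrow> bool" and ID :: "nat \<Rightarrow> nat"
  assumes c1: "c \<ge> 1" and n2: "n \<ge> 2" and sg: "simple_graph n E" and inj: "inj_on ID {0..<n}"
   and idb: "\<forall>v<n. 1 \<le> ID v \<and> real (ID v) \<le> real n powr c"
begin

abbreviation "Hs t v \<equiv> hists (beepalg c) n E ID t v"
abbreviation "act t v \<equiv> beepalg c n (ID v) (Hs t v)"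
definition halted where "halted t v \<longleftrightarrow> (\<exists>S. act t v = Halt S)"
definition ob where "ob k v = (if act k v = Beep then Beeped else if \<exists>u\<in>nbrs n E v. act k u = Beep then Noise else Silence)"

lemma c0: "c \<ge> 0" using c1 by simp
lemma n1: "n \<ge> 1" using n2 by simp

lemma Hs_Suc: "Hs (Suc t) v = (if halted t v then Hs t v else Hs t v @ [ob t v])"
  by (cases "act t v") (auto simp: halted_def ob_def)

lemma halted_Suc: "halted t v \<Longrightarrow> halted (Suc t) v \<and> Hs (Suc t) v = Hs t v"
  using Hs_Suc[of t v] by (auto simp: halted_def)

lemma halted_mono:
  assumes h: "halted t v" and le: "t \<le> t'"
  shows "halted t' v \<and> Hs t' v = Hs t v"
  using le
proof (induction t' rule: dec_induct)
  case base then show ?case using h by simp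
next
  case (step m) then show ?case using halted_Suc[of m v] by simp
qed

lemma nh_before: "\<not> halted t v \<Longrightarrow> t' \<le> t \<Longrightarrow> \<not> halted t' v"
  using halted_mono by blast

lemma len: "(\<forall>t'<t. \<not> halted t' v) \<Longrightarrow> length (Hs t v) = t"
proof (induction t)
  case 0 then show ?case by simp
next
  case (Suc t) then show ?case using Hs_Suc[of t v] by simp
qed

lemma nh_len: "\<not> halted t v \<Longrightarrow> length (Hs t v) = t"
  using len nh_before by (meson less_imp_le)

lemma prefix: "t1 \<le> t2 \<Longrightarrow> \<exists>ys. Hs t2 v = Hs t1 v @ ys"
proof (induction t2 rule: dec_induct)
  case base then show ?case by simp
next
  case (step m) then show ?case using Hs_Suc[of m v] by (cases "halted m v") auto
qed

lemma nth_ob: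
  assumes "\<forall>t'<t. \<not> halted t' v" "k < t"
  shows "Hs t v ! k = ob k v"
proof -
  have "\<not> halted k v" using assms by simp
  then have a: "Hs (Suc k) v = Hs k v @ [ob k v]" using Hs_Suc[of k v] by simp
  have l: "length (Hs k v) = k" using assms by (intro len) auto
  obtain ys where "Hs t v = Hs (Suc k) v @ ys" using prefix[of "Suc k" t v] assms(2) by auto
  then show ?thesis using a l by (simp add: nth_append)
qed

lemma act_nh: "\<not> halted t v \<Longrightarrow> \<not> haltc c n (ID v) (Hs t v)"
  using alg_halt by (auto simp: halted_def)

lemma act_code:
  assumes "\<not> halted t v" "t = ss c n i + r" "r < LL c n i"
  shows "act t v = (if r \<in> code c n i (ID v) then Beep else Listen)"
  using alg_code[OF act_nh[OF assms(1)] _ assms(3)] nh_len[OF assms(1)] assms(2) by simp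

lemma act_status:
  assumes "\<not> halted t v" "t = ss c n i + LL c n i"
  shows "act t v = (if done_by c n (ID v) (Hs t v) i then Listen else Beep)"
  using alg_status[OF act_nh[OF assms(1)]] nh_len[OF assms(1)] assms(2) by simp

lemma halt_first:
  assumes "halted t u"
  shows "\<exists>t0\<le>t. (\<forall>t'<t0. \<not> halted t' u) \<and> act t u = act t0 u \<and> haltc c n (ID u) (Hs t0 u)"
proof -
  define t0 where "t0 = (LEAST t0. halted t0 u)"
  have h0: "halted t0 u" unfolding t0_def using assms by (rule LeastI)
  have le: "t0 \<le> t" unfolding t0_def using assms by (rule Least_le)
  have bef: "\<forall>t'<t0. \<not> halted t' u" unfolding t0_def using not_less_Least by blast
  have "Hs t u = Hs t0 u" using halted_mono[OF h0 le] by simp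
  moreover have "haltc c n (ID u) (Hs t0 u)"
  proof (rule ccontr)
    assume "\<not> haltc c n (ID u) (Hs t0 u)"
    then have "act t0 u = Beep \<or> act t0 u = Listen" by (rule alg_nohalt)
    then show False using h0 by (auto simp: halted_def)
  qed
  ultimately show ?thesis using le bef by auto
qed

lemma halt_char:
  assumes "halted t u"
  shows "\<exists>i. ss c n i + LL c n i < t \<and> ob (ss c n i + LL c n i) u = Silence"
proof -
  obtain t0 where t0: "t0 \<le> t" "\<forall>t'<t0. \<not> halted t' u" "haltc c n (ID u) (Hs t0 u)"
    using halt_first[OF assms] by blast
  have l: "length (Hs t0 u) = t0" using len t0(2) by blast
  obtain i where i: "ss c n i + LL c n i < t0" "Hs t0 u ! (ss c n i + LL c n i) = Silence"
    using t0(3) l unfolding haltc_def by auto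
  have "ob (ss c n i + LL c n i) u = Silence" using nth_ob[OF t0(2) i(1)] i(2) by simp
  moreover have "ss c n i + LL c n i < t" using i(1) t0(1) by linarith
  ultimately show ?thesis by blast
qed

definition nd where "nd v j \<longleftrightarrow> (\<forall>i<j. act (ss c n i + LL c n i) v = Beep)"

lemma nd_self:
  assumes "nd v j" "t \<le> ss c n j + LL c n j"
  shows "\<not> halted t v"
proof
  assume "halted t v"
  then obtain i where i: "ss c n i + LL c n i < t" "ob (ss c n i + LL c n i) v = Silence"
    using halt_char by blast
  have "i < j" using i(1) assms(2) st_less_imp by (meson less_le_trans)
  then have "act (ss c n i + LL c n i) v = Beep" using assms(1) nd_def by blast
  then show False using i(2) by (simp add: ob_def)
qed

lemma nbr_sym: "u \<in> nbrs n E v \<Longrightarrow> v < n \<Longrightarrow> v \<in> nbrs n E u"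
  using sg unfolding nbrs_def simple_graph_def by auto

lemma nd_nbr:
  assumes "v < n" "nd v j" "u \<in> nbrs n E v" "t \<le> ss c n j + LL c n j"
  shows "\<not> halted t u"
proof
  assume "halted t u"
  then obtain i where i: "ss c n i + LL c n i < t" "ob (ss c n i + LL c n i) u = Silence"
    using halt_char by blast
  have "i < j" using i(1) assms(4) st_less_imp by (meson less_le_trans)
  then have "act (ss c n i + LL c n i) v = Beep" using assms(2) nd_def by blast
  moreover have "v \<in> nbrs n E u" using nbr_sym assms by blast
  ultimately show False using i(2) by (auto simp: ob_def split: if_splits)
qed

definition Dset where "Dset j v = {y. y < NN c n \<and> y \<noteq> ID v \<and>
   (\<forall>r \<in> code c n j y - code c n j (ID v). \<exists>u\<in>nbrs n E v. r \<in> code c n j (ID u))}"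

lemma decode:
  assumes v: "v < n" and nd: "nd v j"
  shows "DD c n (ID v) (Hs (ss c n j + LL c n j) v @ ys) j = Dset j v"
proof -
  let ?T = "ss c n j + LL c n j"
  have nhT: "\<not> halted ?T v" using nd_self[OF nd] by simp
  have lenT: "length (Hs ?T v) = ?T" using nh_len[OF nhT] .
  have bef: "\<forall>t'<?T. \<not> halted t' v" using nhT nh_before by (meson less_imp_le)
  have key: "(Hs ?T v @ ys) ! (ss c n j + r) = Noise \<longleftrightarrow> (\<exists>u\<in>nbrs n E v. r \<in> code c n j (ID u))"
    if y: "y < NN c n" and r: "r \<in> code c n j y - code c n j (ID v)" for y r
  proof -
    have rl: "r < LL c n j" using code_lt[OF c0 n1 y] r by blast
    let ?k = "ss c n j + r"
    have "(Hs ?T v @ ys) ! ?k = Hs ?T v ! ?k" using lenT rl by (simp add: nth_append)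
    also have "\<dots> = ob ?k v" using nth_ob[OF bef] rl by simp
    finally have e: "(Hs ?T v @ ys) ! ?k = ob ?k v" .
    have nhk: "\<not> halted ?k v" using nd_self[OF nd] rl by simp
    have av: "act ?k v = Listen" using act_code[OF nhk refl rl] r by simp
    have au: "act ?k u = (if r \<in> code c n j (ID u) then Beep else Listen)" if "u \<in> nbrs n E v" for u
    proof -
      have "\<not> halted ?k u" using nd_nbr[OF v nd that] rl by simp
      then show ?thesis using act_code[OF _ refl rl] by blast
    qed
    have "ob ?k v = (if \<exists>u\<in>nbrs n E v. r \<in> code c n j (ID u) then Noise else Silence)"
      using av au unfolding ob_def by (auto split: if_splits)
    then show ?thesis using e by simp
  qed
  show ?thesis unfolding DD_def Dset_def using key by auto
qed

lemma ID_lt: "u < n \<Longrightarrow> ID u < NN c n"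
proof -
  assume "u < n"
  then have "real (ID u) \<le> real n powr c" using idb by auto
  then have "int (ID u) \<le> \<lfloor>real n powr c\<rfloor>" by (simp add: le_floor_iff)
  then show ?thesis unfolding NN_def by linarith
qed

lemma nbrs_sub: "nbrs n E v \<subseteq> {0..<n}" unfolding nbrs_def by auto

lemma card_Nb: "card (ID ` nbrs n E v) = card (nbrs n E v)"
  using inj nbrs_sub by (meson card_image inj_on_subset)

lemma Nb_sub_D: "v < n \<Longrightarrow> ID ` nbrs n E v \<subseteq> Dset j v"
proof
  fix y assume v: "v < n" and "y \<in> ID ` nbrs n E v"
  then obtain u where u: "u \<in> nbrs n E v" "y = ID u" by auto
  have un: "u < n" "u \<noteq> v" using u(1) sg unfolding nbrs_def simple_graph_def by auto
  have "ID u \<noteq> ID v" using inj_onD[OF inj, of u v] un v by auto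
  then show "y \<in> Dset j v" unfolding Dset_def using u un ID_lt by auto
qed

lemma D_sub_Nb:
  assumes v: "v < n" and k: "card (nbrs n E v) + 1 \<le> KK j"
  shows "Dset j v \<subseteq> ID ` nbrs n E v"
proof
  fix y assume y: "y \<in> Dset j v"
  show "y \<in> ID ` nbrs n E v"
  proof (rule ccontr)
    assume ny: "y \<notin> ID ` nbrs n E v"
    define S where "S = insert (ID v) (ID ` nbrs n E v)"
    have S1: "S \<subseteq> {0..<NN c n}" unfolding S_def nbrs_def using ID_lt v by auto
    have S2: "y \<notin> S" using y ny unfolding S_def Dset_def by auto
    have "card S \<le> card (ID ` nbrs n E v) + 1" unfolding S_def
      using card_insert_le_m1 by (metis Suc_eq_plus1 card_insert_if finite_imageI finite_subset finite_atLeastLessThan le_refl nbrs_sub le_SucI)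
    then have S3: "card S \<le> KK j" using k card_Nb by simp
    have yl: "y < NN c n" using y unfolding Dset_def by auto
    have "code c n j y \<subseteq> (\<Union>z\<in>S. code c n j z)"
    proof
      fix r assume r: "r \<in> code c n j y"
      show "r \<in> (\<Union>z\<in>S. code c n j z)"
      proof (cases "r \<in> code c n j (ID v)")
        case True then show ?thesis unfolding S_def by auto
      next
        case False
        then obtain u where "u \<in> nbrs n E v" "r \<in> code c n j (ID u)" using y r unfolding Dset_def by auto
        then show ?thesis unfolding S_def by auto
      qed
    qed
    then show False using cover_free[OF c0 n1 yl S1 S2 S3] by blast
  qed
qed

lemma D_fin: "finite (Dset j v)"
  by (rule finite_subset[of _ "{0..<NN c n}"]) (auto simp: Dset_def)

lemma D_eq1:
  assumes "v < n" "card (Dset j v) \<le> 2^j"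
  shows "Dset j v = ID ` nbrs n E v"
proof -
  have "card (ID ` nbrs n E v) \<le> card (Dset j v)" using Nb_sub_D[OF assms(1)] D_fin by (rule card_mono[rotated])
  then have "card (nbrs n E v) + 1 \<le> KK j" using assms(2) card_Nb by (simp add: KK_def)
  then show ?thesis using D_sub_Nb[OF assms(1)] Nb_sub_D[OF assms(1)] by blast
qed

lemma D_eq2:
  assumes "v < n" "card (nbrs n E v) \<le> 2^j"
  shows "Dset j v = ID ` nbrs n E v"
  using D_sub_Nb[OF assms(1)] Nb_sub_D[OF assms(1)] assms(2) by (force simp: KK_def)

end


context net
begin

lemma out_ok:
  assumes v: "v < n" and a: "act t v = Halt S"
  shows "S = ID ` nbrs n E v"
proof -
  have "halted t v" using a by (auto simp: halted_def)
  then obtain t0 where t0: "t0 \<le> t" "\<forall>t'<t0. \<not> halted t' v" "act t v = act t0 v"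
      "haltc c n (ID v) (Hs t0 v)"
    using halt_first by blast
  define h where "h = Hs t0 v"
  define x where "x = ID v"
  have lh: "length h = t0" unfolding h_def using len t0(2) by blast
  have S: "S = outp c n x h" using a t0(3,4) alg_halt unfolding h_def x_def by simp
  obtain i where i: "ss c n i + LL c n i < t0" "done_by c n x h i"
    using t0(4) lh unfolding haltc_def h_def x_def by auto
  obtain j where j: "j \<le> i" "card (DD c n x h j) \<le> 2^j" using i(2) unfolding done_by_def by auto
  define j0 where "j0 = (LEAST j. card (DD c n x h j) \<le> 2^j)"
  have j0: "card (DD c n x h j0) \<le> 2^j0" unfolding j0_def using j(2) by (rule LeastI)
  have j0le: "j0 \<le> j" unfolding j0_def using j(2) by (rule Least_le)
  have S': "S = DD c n x h j0" using S unfolding outp_def j0_def by simp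
  have T0: "ss c n j0 + LL c n j0 < t0" using st_le[of j0 i c n] j0le j(1) i(1) by linarith
  have ndv: "nd v j0" unfolding nd_def
  proof (intro allI impI)
    fix i' assume i': "i' < j0"
    let ?T = "ss c n i' + LL c n i'"
    have Tlt: "?T < t0" using st_le[of i' j0 c n] i' T0 by linarith
    have nh: "\<not> halted ?T v" using t0(2) Tlt by blast
    have notdone: "\<not> done_by c n x (Hs ?T v) i'"
    proof
      assume "done_by c n x (Hs ?T v) i'"
      then obtain j' where j': "j' \<le> i'" "card (DD c n x (Hs ?T v) j') \<le> 2^j'" unfolding done_by_def by auto
      obtain ys where ys: "h = Hs ?T v @ ys" using prefix[of ?T t0 v] Tlt unfolding h_def by auto
      have "DD c n x h j' = DD c n x (Hs ?T v) j'" unfolding ys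
        using DD_app[OF c0 n1] st_le[OF j'(1)] nh_len[OF nh] by simp
      then have "card (DD c n x h j') \<le> 2^j'" using j'(2) by simp
      then have "j0 \<le> j'" unfolding j0_def by (rule Least_le)
      then show False using j'(1) i' by simp
    qed
    show "act ?T v = Beep" using act_status[OF nh refl] notdone unfolding x_def by simp
  qed
  obtain ys where ys: "h = Hs (ss c n j0 + LL c n j0) v @ ys"
    using prefix[of "ss c n j0 + LL c n j0" t0 v] T0 unfolding h_def by auto
  have "DD c n x h j0 = Dset j0 v" unfolding ys x_def by (rule decode[OF v ndv])
  then show ?thesis using S' j0 D_eq1[OF v] by simp
qed

lemma done_all:
  assumes deg: "\<forall>v<n. card (nbrs n E v) \<le> 2^k" and w: "w < n"
    and nh: "\<not> halted (ss c n k + LL c n k) w"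
  shows "done_by c n (ID w) (Hs (ss c n k + LL c n k) w) k"
proof (cases "nd w k")
  case True
  have "DD c n (ID w) (Hs (ss c n k + LL c n k) w @ []) k = Dset k w" by (rule decode[OF w True])
  then have "DD c n (ID w) (Hs (ss c n k + LL c n k) w) k = ID ` nbrs n E w" using D_eq2[OF w] deg w by simp
  then show ?thesis unfolding done_by_def using card_Nb deg w by (intro exI[of _ k]) simp
next
  case False
  then obtain i where i: "i < k" "act (ss c n i + LL c n i) w \<noteq> Beep" unfolding nd_def by auto
  let ?Ti = "ss c n i + LL c n i"
  let ?T = "ss c n k + LL c n k"
  have le: "?Ti \<le> ?T" using st_le[of i k c n] i(1) by simp
  have nhi: "\<not> halted ?Ti w" using nh_before[OF nh le] .
  have "done_by c n (ID w) (Hs ?Ti w) i" using act_status[OF nhi refl] i(2) by (simp split: if_splits)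
  then obtain j where j: "j \<le> i" "card (DD c n (ID w) (Hs ?Ti w) j) \<le> 2^j" unfolding done_by_def by auto
  obtain ys where ys: "Hs ?T w = Hs ?Ti w @ ys" using prefix[OF le] by blast
  have "DD c n (ID w) (Hs ?T w) j = DD c n (ID w) (Hs ?Ti w) j" unfolding ys
    using DD_app[OF c0 n1] st_le[OF j(1)] nh_len[OF nhi] by simp
  then show ?thesis unfolding done_by_def using j i(1) by (intro exI[of _ j]) simp
qed

lemma all_halt:
  assumes deg: "\<forall>v<n. card (nbrs n E v) \<le> 2^k" and v: "v < n"
  shows "halted (ss c n (Suc k)) v"
proof (rule ccontr)
  let ?T = "ss c n k + LL c n k"
  assume nh1: "\<not> halted (ss c n (Suc k)) v"
  then have nh1': "\<not> halted (Suc ?T) v" by simp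
  have nh: "\<not> halted ?T v" using nh_before[OF nh1'] by simp
  have notbeep: "act ?T w \<noteq> Beep" if w: "w < n" for w
  proof (cases "halted ?T w")
    case True then show ?thesis by (auto simp: halted_def)
  next
    case False
    then show ?thesis using act_status[OF False refl] done_all[OF deg w False] by simp
  qed
  have obs: "ob ?T v = Silence" unfolding ob_def using notbeep v
    by (auto simp: nbrs_def)
  have HS: "Hs (Suc ?T) v = Hs ?T v @ [ob ?T v]" using Hs_Suc[of ?T v] nh by simp
  have lT: "length (Hs ?T v) = ?T" using nh_len[OF nh] .
  have "done_by c n (ID v) (Hs (Suc ?T) v) k"
    unfolding HS using done_app[OF c0 n1] lT done_all[OF deg v nh] by simp
  moreover have "Hs (Suc ?T) v ! ?T = Silence" unfolding HS using lT obs by (simp add: nth_append)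
  moreover have "?T < length (Hs (Suc ?T) v)" unfolding HS using lT by simp
  ultimately have "haltc c n (ID v) (Hs (Suc ?T) v)" unfolding haltc_def by blast
  then have "halted (Suc ?T) v" using alg_halt by (simp add: halted_def)
  then show False using nh1' by simp
qed

lemma solves:
  assumes deg: "\<forall>v<n. card (nbrs n E v) \<le> 2^k"
  shows "solves_within (beepalg c) n E ID (ss c n (Suc k))"
  unfolding solves_within_def
proof (intro allI impI)
  fix v assume v: "v < n"
  obtain S where S: "act (ss c n (Suc k)) v = Halt S" using all_halt[OF deg v] by (auto simp: halted_def)
  then have "S = ID ` nbrs n E v" using out_ok[OF v] by blast
  then show "\<exists>t\<le>ss c n (Suc k). beepalg c n (ID v) (Hs t v) = Halt (ID ` nbrs n E v)"
    using S by blast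
qed

end

lemma LL_bound: "LL c n j \<le> 12 * bb c n * 4^j"
proof -
  have p: "(1::nat) \<le> 2^j" by simp
  have a: "KK j \<le> 2 * 2^j" using p by (simp add: KK_def)
  have b: "KK j + 1 \<le> 3 * 2^j" using p by (simp add: KK_def)
  have "LL c n j = (KK j + 1) * bb c n * (2 * KK j)" by (simp add: LL_def tt_def qq_def)
  also have "\<dots> \<le> (3 * 2^j) * bb c n * (2 * (2 * 2^j))"
    using a b by (intro mult_mono) auto
  also have "\<dots> = 12 * bb c n * (2^j * 2^j)" by simp
  also have "(2::nat)^j * 2^j = 4^j" by (metis power_mult_distrib mult_2_right numeral_Bit0 numeral_times_numeral semiring_norm(12))
  finally show ?thesis by simp
qed

lemma bb_pos: "bb c n \<ge> 1" by (simp add: bb_def)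

lemma ss_bound: "ss c n i \<le> 6 * bb c n * 4^i"
proof (induction i)
  case 0 then show ?case by simp
next
  case (Suc i)
  have "(1::nat) \<le> bb c n * 4^i" using bb_pos[of c n] by simp
  moreover have "ss c n i \<le> 6 * (bb c n * 4^i)" using Suc.IH by (simp add: mult.assoc)
  moreover have "LL c n i \<le> 12 * (bb c n * 4^i)" using LL_bound[of c n i] by (simp add: mult.assoc)
  ultimately have "ss c n i + LL c n i + 1 \<le> 24 * (bb c n * 4^i)" by linarith
  then have "ss c n (Suc i) \<le> 24 * (bb c n * 4^i)" by simp
  then show ?case by (simp add: mult.assoc)
qed

lemma pow_choice:
  fixes m :: nat assumes "m \<ge> 1"
  shows "\<exists>i. m \<le> 2^i \<and> 2^i \<le> 2 * m"
proof -
  have ex: "\<exists>i. m \<le> 2^i" using less_exp[of m] by (meson less_imp_le)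
  define i where "i = (LEAST i. m \<le> (2::nat)^i)"
  have i1: "m \<le> 2^i" unfolding i_def using ex by (rule LeastI_ex)
  have "2^i \<le> 2 * m"
  proof (cases i)
    case 0 then show ?thesis using assms by simp
  next
    case (Suc i')
    have "\<not> m \<le> 2^i'" using Suc unfolding i_def using not_less_Least[of i' "\<lambda>i. m \<le> 2^i"] by (metis lessI)
    then show ?thesis using Suc by simp
  qed
  then show ?thesis using i1 by blast
qed

lemma final_bound:
  assumes c: "c \<ge> 1" and n: "n \<ge> 2" and m: "m \<ge> 1" and i: "2^i \<le> 2 * m"
  shows "real (ss c n (Suc i)) \<le> 96 * (c + 3) * real m ^ 2 * (log 2 (real n)) ^ 2"
proof -
  have "ss c n (Suc i) \<le> 6 * bb c n * 4^(Suc i)" by (rule ss_bound)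
  also have "\<dots> = 24 * bb c n * (2^i)^2"
  proof -
    have "((2::nat)^i)^2 = (2^2)^i" by (simp only: power_mult[symmetric] mult.commute)
    then show ?thesis by simp
  qed
  also have "\<dots> \<le> 24 * bb c n * (2*m)^2" using i by (intro mult_left_mono power_mono) auto
  finally have "ss c n (Suc i) \<le> 24 * bb c n * (2*m)^2" .
  then have A0: "ss c n (Suc i) \<le> 96 * bb c n * m^2" by (simp add: power_mult_distrib)
  have A: "real (ss c n (Suc i)) \<le> 96 * real (bb c n) * real m ^ 2"
  proof -
    have "real (ss c n (Suc i)) \<le> real (96 * bb c n * m^2)" using A0 by (simp only: of_nat_le_iff)
    then show ?thesis by simp
  qed
  have l1: "log 2 (real n) \<ge> 1" using n by simp
  have "real (bb c n) = real (nat \<lceil>c * log 2 (real n)\<rceil>) + 2" by (simp add: bb_def)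
  also have "\<dots> \<le> c * log 2 (real n) + 3"
  proof -
    have "c * log 2 (real n) \<ge> 0" using c l1 by simp
    then show ?thesis by linarith
  qed
  also have "\<dots> \<le> (c + 3) * log 2 (real n)" using l1 by (simp add: algebra_simps)
  also have "\<dots> \<le> (c + 3) * log 2 (real n) ^ 2" using l1 c
    by (intro mult_left_mono) (auto simp: power2_eq_square)
  finally have B: "real (bb c n) \<le> (c + 3) * log 2 (real n) ^ 2" .
  have "96 * real (bb c n) * real m ^ 2 \<le> 96 * ((c + 3) * log 2 (real n) ^ 2) * real m ^ 2"
    using B by (intro mult_right_mono) auto
  with A show ?thesis by (simp add: algebra_simps)
qed

theorem theorem2:
  fixes c :: real
  assumes "c \<ge> 1"
  shows "\<exists>(A::alg) (C::real). C > 0 \<and>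
    (\<forall>n E ID. n \<ge> 2 \<and> simple_graph n E \<and> inj_on ID {0..<n} \<and>
       (\<forall>v<n. 1 \<le> ID v \<and> real (ID v) \<le> real n powr c) \<longrightarrow>
       (\<exists>T. solves_within A n E ID T \<and>
          real T \<le> C * real (max 1 (max_degree n E)) ^ 2 * (log 2 (real n)) ^ 2))"
proof (intro exI[of _ "beepalg c"] exI[of _ "96 * (c + 3)"] conjI allI impI)
  show "96 * (c + 3) > 0" using assms by simp
  fix n E ID
  assume h: "2 \<le> n \<and> simple_graph n E \<and> inj_on ID {0..<n} \<and> (\<forall>v<n. 1 \<le> ID v \<and> real (ID v) \<le> real n powr c)"
  interpret net c n E ID using h assms by unfold_locales auto
  define m where "m = max 1 (max_degree n E)"
  have m1: "m \<ge> 1" unfolding m_def by simp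
  obtain k where k: "m \<le> 2^k" "2^k \<le> 2 * m" using pow_choice[OF m1] by blast
  have deg: "\<forall>v<n. card (nbrs n E v) \<le> 2^k"
  proof (intro allI impI)
    fix v assume "v < n"
    then have "card (nbrs n E v) \<le> max_degree n E" unfolding max_degree_def by (intro Max_ge) auto
    then show "card (nbrs n E v) \<le> 2^k" using k(1) unfolding m_def by simp
  qed
  show "\<exists>T. solves_within (beepalg c) n E ID T \<and>
          real T \<le> 96 * (c + 3) * real (max 1 (max_degree n E)) ^ 2 * (log 2 (real n)) ^ 2"
    using solves[OF deg] final_bound[OF assms _ m1 k(2)] h unfolding m_def by blast
qed

end
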